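(* Let $w$ be analytic on the open unit disk $D=\{|z|<1\}$ and suppose $w$ has a hard singularity at a point $z_1$ with $|z_1|=1$. Then the angular derivative $w^{\cdot}(z)=izw'(z)$ also has a hard singularity at $z_1$.
   Context: An inner analytic function is one analytic on the open unit disk centered at the origin; its angular derivative is $w^{\cdot}(z)=izw'(z)$. A singular point of $w$ on the unit circle is a point where $w$ fails to be analytic; a singularity at $z_1$ on the unit circle is soft if $\lim_{z\to z_1}w(z)$ (from within the open disk) exists and is finite, and hard otherwise. *)

theory Defs
  imports "HOL-Complex_Analysis.Complex_Analysis"
begin

definition ang_deriv :: "(complex \<Rightarrow> complex) \<Rightarrow> complex \<Rightarrow> complex" where
  "ang_deriv w z = \<i> * z * deriv w z"

definition analytic_at_from_disk :: "(complex \<Rightarrow> complex) \<Rightarrow> complex \<Rightarrow> bool" where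
  "analytic_at_from_disk w z1 \<longleftrightarrow>
     (\<exists>r>0. \<exists>g. g holomorphic_on ball z1 r \<and> (\<forall>z \<in> ball z1 r \<inter> ball 0 1. g z = w z))"

definition singular_point :: "(complex \<Rightarrow> complex) \<Rightarrow> complex \<Rightarrow> bool" where
  "singular_point w z1 \<longleftrightarrow> norm z1 = 1 \<and> \<not> analytic_at_from_disk w z1"

definition soft_singularity :: "(complex \<Rightarrow> complex) \<Rightarrow> complex \<Rightarrow> bool" where
  "soft_singularity w z1 \<longleftrightarrow> singular_point w z1 \<and> (\<exists>L. (w \<longlongrightarrow> L) (at z1 within ball 0 1))"

definition hard_singularity :: "(complex \<Rightarrow> complex) \<Rightarrow> complex \<Rightarrow> bool" where
  "hard_singularity w z1 \<longleftrightarrow> singular_point w z1 \<and> \<not> (\<exists>L. (w \<longlongrightarrow> L) (at z1 within ball 0 1))"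

end

theory Submission
  imports Defs
begin

lemma part1:
  fixes w :: "complex \<Rightarrow> complex" and z1 :: complex
  assumes hol: "w holomorphic_on ball 0 1"
    and na: "\<not> analytic_at_from_disk w z1" and n1: "norm z1 = 1"
  shows "\<not> analytic_at_from_disk (ang_deriv w) z1"
proof
  assume "analytic_at_from_disk (ang_deriv w) z1"
  then obtain r g where r: "r > 0" and g: "g holomorphic_on ball z1 r"
    and eq: "\<And>z. z \<in> ball z1 r \<inter> ball 0 1 \<Longrightarrow> g z = ang_deriv w z"
    unfolding analytic_at_from_disk_def by blast
  define r' where "r' = min r (1/2)"
  have r': "r' > 0" "r' \<le> r" "r' \<le> 1/2" using r by (auto simp: r'_def)
  define B where "B = ball z1 r'"
  have nz: "z \<noteq> 0" if "z \<in> B" for z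
  proof
    assume "z = 0"
    with that have "norm z1 < r'" by (simp add: B_def dist_norm)
    with n1 r' show False by simp
  qed
  have BB: "B \<subseteq> ball z1 r" using r' by (auto simp: B_def)
  define h where "h z = g z / (\<i> * z)" for z
  have hh: "h holomorphic_on B" unfolding h_def
    by (intro holomorphic_intros holomorphic_on_subset[OF g BB]) (use nz in auto)
  obtain F where F: "\<And>x. x \<in> B \<Longrightarrow> (F has_field_derivative h x) (at x within B)"
  proof -
    have "convex B" "open B" unfolding B_def by auto
    from holomorphic_convex_primitive'[OF this hh] that show ?thesis by blast
  qed
  have F': "(F has_field_derivative h x) (at x)" if "x \<in> B" for x
  proof -
    have "at x within B = at x" by (rule at_within_open[OF that]) (simp add: B_def)
    with F[OF that] show ?thesis by simp
  qed
  define U where "U = B \<inter> ball 0 1"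
  have cU: "convex U" unfolding U_def B_def by (intro convex_Int convex_ball)
  have "\<exists>c. \<forall>x\<in>U. (\<lambda>z. w z - F z) x = c"
  proof (rule has_field_derivative_zero_constant[OF cU])
    fix x assume x: "x \<in> U"
    have wd: "(w has_field_derivative deriv w x) (at x)"
      by (rule holomorphic_derivI[OF hol open_ball]) (use x in \<open>simp add: U_def\<close>)
    have "h x = deriv w x"
      using eq[of x] x BB nz[of x] by (auto simp: U_def h_def ang_deriv_def)
    then have "((\<lambda>z. w z - F z) has_field_derivative 0) (at x)"
      using DERIV_diff[OF wd F'[of x]] x by (simp add: U_def)
    then show "((\<lambda>z. w z - F z) has_field_derivative 0) (at x within U)"
      by (rule has_field_derivative_at_within)
  qed
  then obtain c where c: "\<And>x. x \<in> U \<Longrightarrow> w x - F x = c" by blast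
  have "(\<lambda>z. F z + c) holomorphic_on B"
  proof -
    have "F holomorphic_on B"
      using F' by (auto simp: holomorphic_on_def field_differentiable_def
          intro: has_field_derivative_at_within)
    then show ?thesis by (intro holomorphic_intros)
  qed
  moreover have "\<forall>z\<in>ball z1 r' \<inter> ball 0 1. F z + c = w z"
  proof
    fix z assume "z \<in> ball z1 r' \<inter> ball 0 1"
    then have "z \<in> U" by (simp add: U_def B_def)
    from c[OF this, symmetric] show "F z + c = w z" by simp
  qed
  ultimately have "analytic_at_from_disk w z1"
    unfolding analytic_at_from_disk_def B_def using r' by blast
  with na show False by simp
qed

lemma part2:
  fixes w :: "complex \<Rightarrow> complex" and z1 :: complex
  assumes hol: "w holomorphic_on ball 0 1"
    and nl: "\<not> (\<exists>L. (w \<longlongrightarrow> L) (at z1 within ball 0 1))" and n1: "norm z1 = 1"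
  shows "\<not> (\<exists>L. (ang_deriv w \<longlongrightarrow> L) (at z1 within ball 0 1))"
proof
  assume "\<exists>L. (ang_deriv w \<longlongrightarrow> L) (at z1 within ball 0 1)"
  then obtain L where L: "(ang_deriv w \<longlongrightarrow> L) (at z1 within ball 0 1)" by blast
  then have "\<forall>\<^sub>F z in at z1 within ball 0 1. dist (ang_deriv w z) L < 1"
    by (rule tendstoD) simp
  then obtain d where d: "d > 0" and dd: "\<And>z. z \<in> ball 0 1 \<Longrightarrow> z \<noteq> z1 \<Longrightarrow> dist z z1 < d \<Longrightarrow> dist (ang_deriv w z) L < 1"
    unfolding eventually_at by blast
  define e where "e = min d (1/2)"
  have e: "e > 0" "e \<le> d" "e \<le> 1/2" using d by (auto simp: e_def)
  define S where "S = ball z1 e \<inter> ball 0 1"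
  have cS: "convex S" unfolding S_def by (intro convex_Int convex_ball)
  define B where "B = 2 * (norm L + 1)"
  have nzS: "norm z \<ge> 1/2" if "z \<in> S" for z
  proof -
    have "norm z1 \<le> norm z + norm (z1 - z)" by (rule norm_triangle_sub)
    moreover have "norm (z1 - z) < 1/2" using that e by (auto simp: S_def dist_norm)
    ultimately show ?thesis using n1 by simp
  qed
  have bnd: "norm (deriv w z) \<le> B" if z: "z \<in> S" for z
  proof -
    have z1S: "z1 \<notin> S" using n1 by (auto simp: S_def)
    have "dist (ang_deriv w z) L < 1" using dd[of z] z z1S e by (auto simp: S_def dist_commute)
    moreover have "norm (ang_deriv w z) \<le> norm L + norm (ang_deriv w z - L)"
      by (rule norm_triangle_sub)
    ultimately have a: "norm (ang_deriv w z) \<le> norm L + 1"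
      by (simp add: dist_norm)
    have "norm (ang_deriv w z) = norm z * norm (deriv w z)"
      by (simp add: ang_deriv_def norm_mult)
    then have "(1/2) * norm (deriv w z) \<le> norm L + 1"
      using a mult_right_mono[OF nzS[OF z] norm_ge_zero[of "deriv w z"]] by linarith
    then show ?thesis by (simp add: B_def)
  qed
  have lip: "norm (w x - w y) \<le> B * norm (x - y)" if "x \<in> S" "y \<in> S" for x y
  proof (rule field_differentiable_bound[OF cS _ bnd that])
    fix z assume "z \<in> S"
    show "(w has_field_derivative deriv w z) (at z within S)"
      by (rule holomorphic_derivI[OF hol open_ball]) (use \<open>z \<in> S\<close> in \<open>simp add: S_def\<close>)
  qed
  have B0: "B > 0" unfolding B_def by (simp add: add_nonneg_pos)
  have uc: "uniformly_continuous_on S w"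
    unfolding uniformly_continuous_on_def
  proof (intro allI impI)
    fix \<epsilon> :: real assume ep: "\<epsilon> > 0"
    show "\<exists>\<delta>>0. \<forall>x\<in>S. \<forall>x'\<in>S. dist x' x < \<delta> \<longrightarrow> dist (w x') (w x) < \<epsilon>"
    proof (intro exI[of _ "\<epsilon> / B"] conjI ballI impI)
      show "\<epsilon> / B > 0" using ep B0 by simp
      fix x x' assume xx: "x \<in> S" "x' \<in> S" "dist x' x < \<epsilon> / B"
      have "dist (w x') (w x) \<le> B * dist x' x" using lip[OF xx(2,1)] by (simp add: dist_norm)
      also have "\<dots> < B * (\<epsilon> / B)" using xx(3) B0 by (rule mult_strict_left_mono)
      also have "\<dots> = \<epsilon>" using B0 by simp
      finally show "dist (w x') (w x) < \<epsilon>" .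
    qed
  qed
  have "z1 \<in> ball z1 e \<inter> closure (ball 0 1)" using e n1 by simp
  then have "z1 \<in> closure S" unfolding S_def using open_Int_closure_subset[of "ball z1 e" "ball 0 1"] by blast
  then obtain l where l: "(w \<longlongrightarrow> l) (at z1 within S)"
    using uniformly_continuous_on_extension_at_closure[OF uc] by blast
  have "at z1 within ball 0 1 = at z1 within S"
    by (rule at_within_nhd[of _ "ball z1 e"]) (use e in \<open>auto simp: S_def\<close>)
  with l nl show False by simp
qed

theorem mainTheorem9:
  fixes w :: "complex \<Rightarrow> complex" and z1 :: complex
  assumes "w holomorphic_on ball 0 1"
    and "hard_singularity w z1"
  shows "hard_singularity (ang_deriv w) z1"
  using assms part1[OF assms(1)] part2[OF assms(1)]
  unfolding hard_singularity_def singular_point_def by blast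

end
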